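(* Let $R\ge1$ be an integer, $L=6R$, $\eta=n^{1/(2L)}$, and $\mu_*^A=\frac12+2\sum_{k:\,1\le2k+1\le L}\eta^{-(2k+1)}$. For any $\ell\in\{0,1,\ldots,L\}$ and any $\sigma^A\in\mathcal{D}_\ell^A$, $\Pr_{\mu^A\sim\sigma^A}[\mu^A=\mu_*^A]\le e^{4\ell/\eta}\eta^{-2d_1}$, where $d_1$ is the number of odd integers in $\{\ell+1,\ldots,L\}$.
   Context: For $\ell\in\{0,\ldots,L\}$, $S_\ell^A$ is the set of all numbers $\frac12+2\sum_{k:\,1\le2k+1\le\ell}\eta^{-(2k+1)}+2\sum_{k:\,\ell<2k+1\le L}X_{2k+1}\eta^{-(2k+1)}$ with all $X_{2k+1}\in\{0,1\}$. $\pi^A$ is the distribution of $\frac12+2\sum_{k:\,1\le2k+1\le L}X_{2k+1}\eta^{-(2k+1)}$ with $X_{2k+1}$ independent Bernoulli with mean $\eta^{-2}$. $\mathcal{D}_\ell^A$ is the class of distributions $\sigma^A$ with support $S_\ell^A$ such that for all $x,y\in S_\ell^A$, $\frac{\Pr_{\sigma^A}[x]}{\Pr_{\sigma^A}[y]}=\frac{\Pr_{\pi^A}[x]}{\Pr_{\pi^A}[y]}\cdot e^{c}$ for some $c\in[-4\ell/\eta,4\ell/\eta]$. *)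

theory Defs
  imports "HOL-Probability.Probability"
begin

definition oddIdx :: "nat \<Rightarrow> nat set" where
  "oddIdx L = {j. odd j \<and> 1 \<le> j \<and> j \<le> L}"

definition muA :: "real \<Rightarrow> nat \<Rightarrow> (nat \<Rightarrow> bool) \<Rightarrow> real" where
  "muA \<eta> L X = 1/2 + 2 * (\<Sum>j\<in>oddIdx L. (if X j then 1 else 0) / \<eta> ^ j)"

definition SA :: "real \<Rightarrow> nat \<Rightarrow> nat \<Rightarrow> real set" where
  "SA \<eta> L l = {1/2 + 2 * (\<Sum>j\<in>{j\<in>oddIdx L. j \<le> l}. 1 / \<eta> ^ j)
                     + 2 * (\<Sum>j\<in>{j\<in>oddIdx L. l < j}. (if X j then 1 else 0) / \<eta> ^ j) | X. True}"

definition piA :: "real \<Rightarrow> nat \<Rightarrow> real pmf" where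
  "piA \<eta> L = map_pmf (muA \<eta> L) (Pi_pmf (oddIdx L) False (\<lambda>_. bernoulli_pmf (1 / \<eta>^2)))"

definition DA :: "real \<Rightarrow> nat \<Rightarrow> nat \<Rightarrow> real pmf set" where
  "DA \<eta> L l = {\<sigma>. set_pmf \<sigma> = SA \<eta> L l \<and>
     (\<forall>x\<in>SA \<eta> L l. \<forall>y\<in>SA \<eta> L l. \<exists>c. -4 * real l / \<eta> \<le> c \<and> c \<le> 4 * real l / \<eta> \<and>
        pmf \<sigma> x / pmf \<sigma> y = pmf (piA \<eta> L) x / pmf (piA \<eta> L) y * exp c)}"

end

theory Submission
  imports Defs
begin

theorem lemma9:
  fixes n R L l :: nat and \<eta> \<mu>star :: real and \<sigma> :: "real pmf"
  assumes "n \<ge> 1" and "R \<ge> 1" and "L = 6 * R"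
    and "\<eta> = real n powr (1 / (2 * real L))"
    and "\<mu>star = 1/2 + 2 * (\<Sum>j\<in>oddIdx L. 1 / \<eta> ^ j)"
    and "l \<le> L"
    and "\<sigma> \<in> DA \<eta> L l"
  shows "pmf \<sigma> \<mu>star \<le> exp (4 * real l / \<eta>) * \<eta> powr (- 2 * real (card {j. odd j \<and> l + 1 \<le> j \<and> j \<le> L}))"
proof -
  define A where "A = oddIdx L"
  define p where "p = 1 / \<eta>^2"
  define Pm where "Pm = Pi_pmf A False (\<lambda>_. bernoulli_pmf p)"
  define f where "f = muA \<eta> L"
  define K where "K = 4 * real l / \<eta>"
  define Al where "Al = {j\<in>A. j \<le> l}"
  define Ah where "Ah = {j\<in>A. l < j}"
  define \<pi> where "\<pi> = piA \<eta> L"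
  define S where "S = SA \<eta> L l"
  have pi_def': "\<pi> = map_pmf f Pm" unfolding \<pi>_def piA_def f_def Pm_def A_def p_def by simp
  have eta1: "\<eta> \<ge> 1" using assms(1,4) by (simp add: ge_one_powr_ge_zero)
  have p01: "0 < p" "p \<le> 1" using eta1 unfolding p_def by (auto simp: field_simps)
  have finA: "finite A" unfolding A_def oddIdx_def by (rule finite_subset[of _ "{..L}"]) auto
  have berT: "measure_pmf.prob (bernoulli_pmf p) {True} = p" using p01 by (simp add: measure_pmf_single)
  have cardA: "card A = card Al + card Ah"
  proof -
    have "A = Al \<union> Ah" "Al \<inter> Ah = {}" unfolding Al_def Ah_def by auto
    then show ?thesis using finA card_Un_disjoint[of Al Ah] unfolding Al_def Ah_def by auto
  qed
  have cardAh: "card Ah = card {j. odd j \<and> l + 1 \<le> j \<and> j \<le> L}"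
    unfolding Ah_def A_def oddIdx_def by (rule arg_cong[where f=card]) auto
  have pistar: "pmf \<pi> \<mu>star \<le> p ^ card A"
  proof -
    have "f -` {\<mu>star} \<subseteq> Pi A (\<lambda>_. {True})"
    proof
      fix X assume X: "X \<in> f -` {\<mu>star}"
      show "X \<in> Pi A (\<lambda>_. {True})"
      proof (rule ccontr)
        assume "X \<notin> Pi A (\<lambda>_. {True})"
        then obtain j0 where j0: "j0 \<in> A" "\<not> X j0" by auto
        have "(\<Sum>j\<in>A. (if X j then 1 else 0) / \<eta> ^ j) < (\<Sum>j\<in>A. 1 / \<eta> ^ j)"
          apply (rule sum_strict_mono_ex1[OF finA])
          using j0 eta1 by (auto simp: divide_le_cancel)
        then show False using X unfolding f_def muA_def assms(5) A_def by simp
      qed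
    qed
    then have "pmf \<pi> \<mu>star \<le> measure_pmf.prob Pm (Pi A (\<lambda>_. {True}))"
      unfolding pi_def' by (simp add: pmf_map measure_pmf.finite_measure_mono)
    also have "\<dots> = p ^ card A" unfolding Pm_def
      by (subst measure_Pi_pmf_Pi[OF finA]) (simp add: berT)
    finally show ?thesis .
  qed
  have piS: "p ^ card Al \<le> measure_pmf.prob \<pi> S"
  proof -
    define B where "B = (\<lambda>j. if j \<le> l then {True} else (UNIV :: bool set))"
    have "Pi A B \<subseteq> f -` S"
    proof
      fix X assume X: "X \<in> Pi A B"
      have eq: "(\<Sum>j\<in>A. (if X j then 1 else 0) / \<eta> ^ j) =
          (\<Sum>j\<in>Al. 1 / \<eta> ^ j) + (\<Sum>j\<in>Ah. (if X j then 1 else 0) / \<eta> ^ j)"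
      proof -
        have "A = Al \<union> Ah" "Al \<inter> Ah = {}" unfolding Al_def Ah_def by auto
        then have "(\<Sum>j\<in>A. (if X j then 1 else 0) / \<eta> ^ j) =
          (\<Sum>j\<in>Al. (if X j then 1 else 0) / \<eta> ^ j) + (\<Sum>j\<in>Ah. (if X j then 1 else 0) / \<eta> ^ j)"
          using finA by (metis (no_types, lifting) finite_Un sum.union_disjoint)
        moreover have "(\<Sum>j\<in>Al. (if X j then 1 else 0) / \<eta> ^ j) = (\<Sum>j\<in>Al. 1 / \<eta> ^ j)"
          using X unfolding Al_def B_def by (intro sum.cong) (auto simp: Pi_def)
        ultimately show ?thesis by simp
      qed
      show "X \<in> f -` S" unfolding S_def SA_def f_def muA_def
        using eq unfolding A_def Al_def Ah_def by (auto simp: algebra_simps)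
    qed
    then have "measure_pmf.prob Pm (Pi A B) \<le> measure_pmf.prob \<pi> S"
      unfolding pi_def' by (simp add: measure_pmf.finite_measure_mono)
    moreover have "measure_pmf.prob Pm (Pi A B) = p ^ card Al"
    proof -
      have "measure_pmf.prob Pm (Pi A B) = (\<Prod>j\<in>A. if j \<le> l then p else 1)" unfolding Pm_def
        by (subst measure_Pi_pmf_Pi[OF finA]) (auto simp: berT B_def intro!: prod.cong)
      also have "\<dots> = p ^ card Al" unfolding Al_def
        using finA by (simp add: prod.If_cases Int_def conj_commute)
      finally show ?thesis .
    qed
    ultimately show ?thesis by simp
  qed
  have finS: "finite S"
  proof -
    define g where "g = (\<lambda>T. 1/2 + 2 * (\<Sum>j\<in>{j\<in>oddIdx L. j \<le> l}. 1 / \<eta> ^ j)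
                     + 2 * (\<Sum>j\<in>{j\<in>oddIdx L. l < j}. (if j \<in> T then 1 else 0) / \<eta> ^ (j::nat)))"
    have "S \<subseteq> g ` Pow A"
    proof
      fix y assume "y \<in> S"
      then obtain X where y: "y = 1/2 + 2 * (\<Sum>j\<in>{j\<in>oddIdx L. j \<le> l}. 1 / \<eta> ^ j)
                     + 2 * (\<Sum>j\<in>{j\<in>oddIdx L. l < j}. (if X j then 1 else 0) / \<eta> ^ j)"
        unfolding S_def SA_def by auto
      have "y = g {j\<in>A. X j}" unfolding y g_def A_def
        by (auto intro!: sum.cong)
      then show "y \<in> g ` Pow A" by auto
    qed
    then show ?thesis using finA finite_subset by blast
  qed
  have sigS: "set_pmf \<sigma> = S" and rat: "\<And>x y. x \<in> S \<Longrightarrow> y \<in> S \<Longrightarrow> \<exists>c. - K \<le> c \<and> c \<le> K \<and>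
        pmf \<sigma> x / pmf \<sigma> y = pmf \<pi> x / pmf \<pi> y * exp c"
    using assms(7) unfolding DA_def S_def \<pi>_def K_def by auto
  have sum1: "(\<Sum>y\<in>S. pmf \<sigma> y) = 1"
    using sum_pmf_eq_1[OF finS] sigS by simp
  have sumpi: "(\<Sum>y\<in>S. pmf \<pi> y) = measure_pmf.prob \<pi> S"
    using measure_measure_pmf_finite[OF finS, of \<pi>] by simp
  have starS: "\<mu>star \<in> S"
    unfolding S_def SA_def assms(5)
  proof (intro CollectI exI[of _ "\<lambda>_. True"] conjI TrueI)
    have "A = Al \<union> Ah" "Al \<inter> Ah = {}" unfolding Al_def Ah_def by auto
    then have "(\<Sum>j\<in>A. 1 / \<eta> ^ j) = (\<Sum>j\<in>Al. 1 / \<eta> ^ j) + (\<Sum>j\<in>Ah. 1 / \<eta> ^ j)"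
      using finA by (metis (no_types, lifting) finite_Un sum.union_disjoint)
    then show "1 / 2 + 2 * (\<Sum>j\<in>oddIdx L. 1 / \<eta> ^ j) =
      1 / 2 + 2 * (\<Sum>j\<in>{j \<in> oddIdx L. j \<le> l}. 1 / \<eta> ^ j) + 2 * (\<Sum>j\<in>{j \<in> oddIdx L. l < j}. (if True then 1 else 0) / \<eta> ^ j)"
      unfolding A_def Al_def Ah_def by simp
  qed
  have key: "pmf \<sigma> \<mu>star * pmf \<pi> y \<le> exp K * pmf \<pi> \<mu>star * pmf \<sigma> y" if y: "y \<in> S" for y
  proof -
    obtain c where c: "- K \<le> c" "c \<le> K" "pmf \<sigma> \<mu>star / pmf \<sigma> y = pmf \<pi> \<mu>star / pmf \<pi> y * exp c"
      using rat[OF starS y] by blast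
    have sy: "pmf \<sigma> y > 0" using y sigS by (simp add: pmf_positive)
    show ?thesis
    proof (cases "pmf \<pi> y = 0")
      case True then show ?thesis by simp
    next
      case False
      then have py: "pmf \<pi> y > 0" by (simp add: order_less_le)
      have "pmf \<sigma> \<mu>star * pmf \<pi> y = pmf \<pi> \<mu>star * exp c * pmf \<sigma> y"
        using c(3) sy py by (simp add: field_simps)
      also have "\<dots> \<le> pmf \<pi> \<mu>star * exp K * pmf \<sigma> y"
        using c(2) by (intro mult_right_mono mult_left_mono) auto
      finally show ?thesis by (simp add: algebra_simps)
    qed
  qed
  have "pmf \<sigma> \<mu>star * p ^ card Al \<le> pmf \<sigma> \<mu>star * measure_pmf.prob \<pi> S"
    using piS by (simp add: mult_left_mono)
  also have "\<dots> = (\<Sum>y\<in>S. pmf \<sigma> \<mu>star * pmf \<pi> y)" by (simp add: sumpi[symmetric] sum_distrib_left)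
  also have "\<dots> \<le> (\<Sum>y\<in>S. exp K * pmf \<pi> \<mu>star * pmf \<sigma> y)" by (intro sum_mono key)
  also have "\<dots> = exp K * pmf \<pi> \<mu>star" by (simp add: sum_distrib_left[symmetric] sum1)
  also have "\<dots> \<le> exp K * p ^ card A" using pistar by simp
  also have "\<dots> = exp K * p ^ card Ah * p ^ card Al" by (simp add: cardA power_add)
  finally have "pmf \<sigma> \<mu>star * p ^ card Al \<le> (exp K * p ^ card Ah) * p ^ card Al" .
  moreover have "p ^ card Al > 0" using p01 by simp
  ultimately have "pmf \<sigma> \<mu>star \<le> exp K * p ^ card Ah"
    by (rule mult_right_le_imp_le)
  moreover have "p ^ card Ah = \<eta> powr (- 2 * real (card Ah))"
  proof -
    have e0: "\<eta> > 0" using eta1 by simp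
    have "\<eta> powr (- 2 * real (card Ah)) = inverse (\<eta> powr (real (2 * card Ah)))"
      by (simp add: powr_minus)
    also have "\<eta> powr (real (2 * card Ah)) = \<eta> ^ (2 * card Ah)"
      by (rule powr_realpow[OF e0])
    finally show ?thesis unfolding p_def
      by (simp add: power_mult power_one_over divide_inverse power_inverse)
  qed
  ultimately show ?thesis unfolding K_def cardAh by simp
qed
end
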